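(* Let $\theta:H\to H$ be an endomorphism. Then the zero hyperideal $\{0\}$ is a $\theta$-maximal hyperideal of $H$ if and only if $\operatorname{Max}(H)=\{\operatorname{Ker}\theta\}$.
   Context: Throughout, $(H,h,k)$ is a commutative Krasner $(m,n)$-hyperring with scalar identity $1_H$: $(H,h)$ is a canonical $m$-ary hypergroup (a commutative associative $m$-ary hyperoperation $h:H^m\to\mathcal P^*(H)$ with a unique zero $0$ such that $h(u,0^{(m-1)})=\{u\}$, unique inverses, reversibility), $k:H^n\to H$ is a commutative associative $n$-ary operation distributing over $h$ in each argument, $k(0,u_2^n)=0$, and $k(u,1_H^{(n-1)})=u$ for all $u$. A hyperideal is a nonempty $I\subseteq H$ such that $(I,h)$ is an $m$-ary subhypergroup and $k(u_1^{i-1},I,u_{i+1}^n)\subseteq I$ for all $u_j\in H$. $\operatorname{Max}(H)$ is the set of maximal hyperideals (proper hyperideals $M$ such that $M\subseteq I$ for a hyperideal $I$ implies $I=M$ or $I=H$). An endomorphism is a map $\theta$ with $\theta(h(u_1^m))=h(\theta(u_1),\dots,\theta(u_m))$, $\theta(k(u_1^n))=k(\theta(u_1),\dots,\theta(u_n))$, $\theta(1_H)=1_H$; $\operatorname{Ker}\theta=\{u:\theta(u)=0\}$. A proper hyperideal $M$ is $\theta$-maximal if for every hyperideal $E$ with $M\subseteq E$, either $\theta(E)\subseteq M$ or $E=H$. *)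

theory Defs
  imports "HOL-Library.Multiset"
begin

text \<open>An m-ary hyperoperation is
  modelled as a function on lists (only lists of length m over H matter), an
  n-ary operation likewise.  Positions are 0-based.\<close>

definition lists_over :: "'a set \<Rightarrow> nat \<Rightarrow> 'a list set" where
  "lists_over A l = {xs. length xs = l \<and> set xs \<subseteq> A}"

text \<open>Extension of h to (h x_1^{i}, h(x_{i+1}^{i+m}), x_{i+m+1}^{2m-1}) on a list of length 2m-1.\<close>
definition hassoc_at :: "nat \<Rightarrow> ('a list \<Rightarrow> 'a set) \<Rightarrow> nat \<Rightarrow> 'a list \<Rightarrow> 'a set" where
  "hassoc_at m h i xs = (\<Union>z \<in> h (take m (drop i xs)). h (take i xs @ [z] @ drop (i + m) xs))"

definition m_ary_hypergroup :: "'a set \<Rightarrow> nat \<Rightarrow> ('a list \<Rightarrow> 'a set) \<Rightarrow> bool" where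
  "m_ary_hypergroup H m h \<longleftrightarrow>
     m \<ge> 2 \<and>
     (\<forall>xs \<in> lists_over H m. h xs \<noteq> {} \<and> h xs \<subseteq> H) \<and>
     (\<forall>xs \<in> lists_over H (2*m - 1). \<forall>i<m. \<forall>j<m. hassoc_at m h i xs = hassoc_at m h j xs) \<and>
     (\<forall>xs \<in> lists_over H m. \<forall>i<m. (\<Union>z\<in>H. h (xs[i := z])) = H)"

definition commutative_hyperop :: "'a set \<Rightarrow> nat \<Rightarrow> ('a list \<Rightarrow> 'a set) \<Rightarrow> bool" where
  "commutative_hyperop H m h \<longleftrightarrow>
     (\<forall>xs \<in> lists_over H m. \<forall>ys. mset ys = mset xs \<longrightarrow> h ys = h xs)"

definition hinv :: "'a set \<Rightarrow> nat \<Rightarrow> ('a list \<Rightarrow> 'a set) \<Rightarrow> 'a \<Rightarrow> 'a \<Rightarrow> 'a" where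
  "hinv H m h z x = (THE y. y \<in> H \<and> z \<in> h (x # y # replicate (m - 2) z))"

definition canonical_m_ary_hypergroup :: "'a set \<Rightarrow> nat \<Rightarrow> ('a list \<Rightarrow> 'a set) \<Rightarrow> 'a \<Rightarrow> bool" where
  "canonical_m_ary_hypergroup H m h z \<longleftrightarrow>
     m_ary_hypergroup H m h \<and> commutative_hyperop H m h \<and>
     z \<in> H \<and> (\<forall>x\<in>H. h (x # replicate (m - 1) z) = {x}) \<and>
     (\<forall>e\<in>H. (\<forall>x\<in>H. h (x # replicate (m - 1) e) = {x}) \<longrightarrow> e = z) \<and>
     (\<forall>x\<in>H. \<exists>!y. y \<in> H \<and> z \<in> h (x # y # replicate (m - 2) z)) \<and>
     (\<forall>xs \<in> lists_over H m. \<forall>x. x \<in> h xs \<longrightarrow>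
        (\<forall>i<m. xs ! i \<in> h ((map (hinv H m h z) xs)[i := x])))"

definition krasner_hyperring ::
  "'a set \<Rightarrow> nat \<Rightarrow> nat \<Rightarrow> ('a list \<Rightarrow> 'a set) \<Rightarrow> ('a list \<Rightarrow> 'a) \<Rightarrow> 'a \<Rightarrow> 'a \<Rightarrow> bool" where
  "krasner_hyperring H m n h k z one \<longleftrightarrow>
     canonical_m_ary_hypergroup H m h z \<and>
     n \<ge> 2 \<and>
     (\<forall>xs \<in> lists_over H n. k xs \<in> H) \<and>
     (\<forall>xs \<in> lists_over H (2*n - 1). \<forall>i<n. \<forall>j<n.
        k (take i xs @ [k (take n (drop i xs))] @ drop (i + n) xs) =
        k (take j xs @ [k (take n (drop j xs))] @ drop (j + n) xs)) \<and>
     (\<forall>xs \<in> lists_over H n. \<forall>ys. mset ys = mset xs \<longrightarrow> k ys = k xs) \<and>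
     (\<forall>as \<in> lists_over H (n - 1). \<forall>i<n. \<forall>xs \<in> lists_over H m.
        (\<lambda>a. k (take i as @ a # drop i as)) ` h xs = h (map (\<lambda>x. k (take i as @ x # drop i as)) xs)) \<and>
     (\<forall>as \<in> lists_over H (n - 1). \<forall>i<n. k (take i as @ z # drop i as) = z) \<and>
     one \<in> H \<and> (\<forall>x\<in>H. k (x # replicate (n - 1) one) = x)"

definition hyperideal ::
  "'a set \<Rightarrow> nat \<Rightarrow> nat \<Rightarrow> ('a list \<Rightarrow> 'a set) \<Rightarrow> ('a list \<Rightarrow> 'a) \<Rightarrow> 'a set \<Rightarrow> bool" where
  "hyperideal H m n h k I \<longleftrightarrow>
     I \<noteq> {} \<and> I \<subseteq> H \<and>
     \<comment> \<open>(I,h) is an m-ary subhypergroup: closed, and reproductive inside I\<close>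
     (\<forall>xs \<in> lists_over I m. h xs \<subseteq> I) \<and>
     (\<forall>xs \<in> lists_over I m. \<forall>i<m. (\<Union>u\<in>I. h (xs[i := u])) = I) \<and>
     (\<forall>as \<in> lists_over H (n - 1). \<forall>i<n. \<forall>u\<in>I. k (take i as @ u # drop i as) \<in> I)"

definition MaxH ::
  "'a set \<Rightarrow> nat \<Rightarrow> nat \<Rightarrow> ('a list \<Rightarrow> 'a set) \<Rightarrow> ('a list \<Rightarrow> 'a) \<Rightarrow> 'a set set" where
  "MaxH H m n h k = {M. hyperideal H m n h k M \<and> M \<noteq> H \<and>
       (\<forall>I. hyperideal H m n h k I \<and> M \<subseteq> I \<longrightarrow> I = M \<or> I = H)}"

definition endomorphism ::
  "'a set \<Rightarrow> nat \<Rightarrow> nat \<Rightarrow> ('a list \<Rightarrow> 'a set) \<Rightarrow> ('a list \<Rightarrow> 'a) \<Rightarrow> 'a \<Rightarrow> ('a \<Rightarrow> 'a) \<Rightarrow> bool" where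
  "endomorphism H m n h k one \<theta> \<longleftrightarrow>
     \<theta> ` H \<subseteq> H \<and>
     (\<forall>xs \<in> lists_over H m. \<theta> ` h xs = h (map \<theta> xs)) \<and>
     (\<forall>xs \<in> lists_over H n. \<theta> (k xs) = k (map \<theta> xs)) \<and>
     \<theta> one = one"

definition Ker :: "'a set \<Rightarrow> 'a \<Rightarrow> ('a \<Rightarrow> 'a) \<Rightarrow> 'a set" where
  "Ker H z \<theta> = {u \<in> H. \<theta> u = z}"

definition theta_maximal ::
  "'a set \<Rightarrow> nat \<Rightarrow> nat \<Rightarrow> ('a list \<Rightarrow> 'a set) \<Rightarrow> ('a list \<Rightarrow> 'a) \<Rightarrow> ('a \<Rightarrow> 'a) \<Rightarrow> 'a set \<Rightarrow> bool" where
  "theta_maximal H m n h k \<theta> M \<longleftrightarrow>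
     hyperideal H m n h k M \<and> M \<noteq> H \<and>
     (\<forall>E. hyperideal H m n h k E \<and> M \<subseteq> E \<longrightarrow> \<theta> ` E \<subseteq> M \<or> E = H)"

end

theory Submission
  imports Defs
begin
lemma kr:
  assumes "krasner_hyperring H m n h k z one"
  shows kr_m2: "m \<ge> 2" and kr_n2: "n \<ge> 2" and kr_z: "z \<in> H" and kr_one: "one \<in> H"
  and kr_hclos: "\<And>xs. xs \<in> lists_over H m \<Longrightarrow> h xs \<subseteq> H"
  and kr_hrep: "\<And>xs i. xs \<in> lists_over H m \<Longrightarrow> i < m \<Longrightarrow> (\<Union>u\<in>H. h (xs[i:=u])) = H"
  and kr_comm: "\<And>xs ys. xs \<in> lists_over H m \<Longrightarrow> mset ys = mset xs \<Longrightarrow> h ys = h xs"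
  and kr_h0: "\<And>x. x \<in> H \<Longrightarrow> h (x # replicate (m-1) z) = {x}"
  and kr_kclos: "\<And>xs. xs \<in> lists_over H n \<Longrightarrow> k xs \<in> H"
  and kr_k0: "\<And>as i. as \<in> lists_over H (n-1) \<Longrightarrow> i < n \<Longrightarrow> k (take i as @ z # drop i as) = z"
  and kr_k1: "\<And>x. x \<in> H \<Longrightarrow> k (x # replicate (n-1) one) = x"
proof -
  note A = assms[unfolded krasner_hyperring_def]
  note C = A[THEN conjunct1, unfolded canonical_m_ary_hypergroup_def]
  note M = C[THEN conjunct1, unfolded m_ary_hypergroup_def]
  note Co = C[THEN conjunct2, THEN conjunct1, unfolded commutative_hyperop_def]
  show "m \<ge> 2" using M[THEN conjunct1] .
  show "n \<ge> 2" using A[THEN conjunct2, THEN conjunct1] .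
  show "z \<in> H" using C[THEN conjunct2, THEN conjunct2, THEN conjunct1] .
  show "one \<in> H" using A[THEN conjunct2, THEN conjunct2, THEN conjunct2, THEN conjunct2,
     THEN conjunct2, THEN conjunct2, THEN conjunct2, THEN conjunct1] .
  show "\<And>xs. xs \<in> lists_over H m \<Longrightarrow> h xs \<subseteq> H" using M[THEN conjunct2, THEN conjunct1] by blast
  show "\<And>xs i. xs \<in> lists_over H m \<Longrightarrow> i < m \<Longrightarrow> (\<Union>u\<in>H. h (xs[i:=u])) = H"
    using M[THEN conjunct2, THEN conjunct2, THEN conjunct2] by blast
  show "\<And>xs ys. xs \<in> lists_over H m \<Longrightarrow> mset ys = mset xs \<Longrightarrow> h ys = h xs" using Co by blast
  show "\<And>x. x \<in> H \<Longrightarrow> h (x # replicate (m-1) z) = {x}"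
    using C[THEN conjunct2, THEN conjunct2, THEN conjunct2, THEN conjunct1] by blast
  show "\<And>xs. xs \<in> lists_over H n \<Longrightarrow> k xs \<in> H"
    using A[THEN conjunct2, THEN conjunct2, THEN conjunct1] by blast
  show "\<And>as i. as \<in> lists_over H (n-1) \<Longrightarrow> i < n \<Longrightarrow> k (take i as @ z # drop i as) = z"
    using A[THEN conjunct2, THEN conjunct2, THEN conjunct2, THEN conjunct2,
     THEN conjunct2, THEN conjunct2, THEN conjunct1] by blast
  show "\<And>x. x \<in> H \<Longrightarrow> k (x # replicate (n-1) one) = x" 
    using A[THEN conjunct2, THEN conjunct2, THEN conjunct2, THEN conjunct2,
     THEN conjunct2, THEN conjunct2, THEN conjunct2, THEN conjunct2] by blast
qed

lemma en:
  assumes "endomorphism H m n h k one \<theta>"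
  shows en_H: "\<And>x. x \<in> H \<Longrightarrow> \<theta> x \<in> H"
  and en_h: "\<And>xs. xs \<in> lists_over H m \<Longrightarrow> \<theta> ` h xs = h (map \<theta> xs)"
  and en_k: "\<And>xs. xs \<in> lists_over H n \<Longrightarrow> \<theta> (k xs) = k (map \<theta> xs)"
  and en_one: "\<theta> one = one"
proof -
  note A = assms[unfolded endomorphism_def]
  show "\<And>x. x \<in> H \<Longrightarrow> \<theta> x \<in> H" using A[THEN conjunct1] by blast
  show "\<And>xs. xs \<in> lists_over H m \<Longrightarrow> \<theta> ` h xs = h (map \<theta> xs)" using A[THEN conjunct2, THEN conjunct1] by blast
  show "\<And>xs. xs \<in> lists_over H n \<Longrightarrow> \<theta> (k xs) = k (map \<theta> xs)" using A[THEN conjunct2, THEN conjunct2, THEN conjunct1] by blast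
  show "\<theta> one = one" using A[THEN conjunct2, THEN conjunct2, THEN conjunct2] .
qed

lemma hi:
  assumes "hyperideal H m n h k I"
  shows hi_ne: "I \<noteq> {}" and hi_H: "I \<subseteq> H"
  and hi_clos: "\<And>xs. xs \<in> lists_over I m \<Longrightarrow> h xs \<subseteq> I"
  and hi_rep: "\<And>xs i. xs \<in> lists_over I m \<Longrightarrow> i < m \<Longrightarrow> (\<Union>u\<in>I. h (xs[i:=u])) = I"
  and hi_abs: "\<And>as i u. as \<in> lists_over H (n-1) \<Longrightarrow> i < n \<Longrightarrow> u \<in> I \<Longrightarrow> k (take i as @ u # drop i as) \<in> I"
proof -
  note A = assms[unfolded hyperideal_def]
  show "I \<noteq> {}" using A[THEN conjunct1] .
  show "I \<subseteq> H" using A[THEN conjunct2, THEN conjunct1] .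
  show "\<And>xs. xs \<in> lists_over I m \<Longrightarrow> h xs \<subseteq> I" using A[THEN conjunct2, THEN conjunct2, THEN conjunct1] by blast
  show "\<And>xs i. xs \<in> lists_over I m \<Longrightarrow> i < m \<Longrightarrow> (\<Union>u\<in>I. h (xs[i:=u])) = I"
    using A[THEN conjunct2, THEN conjunct2, THEN conjunct2, THEN conjunct1] by blast
  show "\<And>as i u. as \<in> lists_over H (n-1) \<Longrightarrow> i < n \<Longrightarrow> u \<in> I \<Longrightarrow> k (take i as @ u # drop i as) \<in> I"
    using A[THEN conjunct2, THEN conjunct2, THEN conjunct2, THEN conjunct2] by blast
qed

lemma rep_split: "n \<ge> 2 \<Longrightarrow> replicate (n-1) a = a # replicate (n-2) a"
proof -
  assume "n \<ge> 2"
  then have "n - 1 = Suc (n-2)" by arith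
  then show ?thesis by simp
qed

lemma zero_in:
  assumes K: "krasner_hyperring H m n h k z one" and I: "hyperideal H m n h k I"
  shows "z \<in> I"
proof -
  obtain u where u: "u \<in> I" using hi_ne[OF I] by blast
  have uH: "u \<in> H" using u hi_H[OF I] by blast
  have n2: "n \<ge> 2" by (rule kr_n2[OF K])
  have l1: "u # replicate (n-2) one \<in> lists_over H (n-1)"
    using uH kr_one[OF K] n2 by (auto simp: lists_over_def)
  have l2: "z # replicate (n-2) one \<in> lists_over H (n-1)"
    using kr_z[OF K] kr_one[OF K] n2 by (auto simp: lists_over_def)
  have "k (take 1 (u # replicate (n-2) one) @ z # drop 1 (u # replicate (n-2) one)) = z"
    using kr_k0[OF K l1, of 1] n2 by simp
  moreover have "k (take 0 (z # replicate (n-2) one) @ u # drop 0 (z # replicate (n-2) one)) \<in> I"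
    using hi_abs[OF I l2, of 0 u] n2 u by simp
  ultimately show ?thesis by simp
qed

lemma one_in:
  assumes K: "krasner_hyperring H m n h k z one" and I: "hyperideal H m n h k I"
    and o: "one \<in> I"
  shows "I = H"
proof
  show "I \<subseteq> H" by (rule hi_H[OF I])
  show "H \<subseteq> I"
  proof
    fix x assume x: "x \<in> H"
    have n2: "n \<ge> 2" by (rule kr_n2[OF K])
    have l1: "x # replicate (n-2) one \<in> lists_over H (n-1)"
      using x kr_one[OF K] n2 by (auto simp: lists_over_def)
    have "k (take 1 (x # replicate (n-2) one) @ one # drop 1 (x # replicate (n-2) one)) \<in> I"
      using hi_abs[OF I l1, of 1 one] n2 o by simp
    then have "k (x # replicate (n-1) one) \<in> I" using rep_split[OF n2, of one] by simp
    then show "x \<in> I" using kr_k1[OF K x] by simp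
  qed
qed

lemma one_ne_z:
  assumes K: "krasner_hyperring H m n h k z one" and ne: "{z} \<noteq> H"
  shows "one \<noteq> z"
proof
  assume oz: "one = z"
  have n2: "n \<ge> 2" by (rule kr_n2[OF K])
  have "H \<subseteq> {z}"
  proof
    fix x assume x: "x \<in> H"
    have l1: "x # replicate (n-2) z \<in> lists_over H (n-1)"
      using x kr_z[OF K] n2 by (auto simp: lists_over_def)
    have "k (take 1 (x # replicate (n-2) z) @ z # drop 1 (x # replicate (n-2) z)) = z"
      using kr_k0[OF K l1, of 1] n2 by simp
    then have "k (x # replicate (n-1) z) = z" using rep_split[OF n2, of z] by simp
    then show "x \<in> {z}" using kr_k1[OF K x] oz by simp
  qed
  then show False using ne kr_z[OF K] by blast
qed

lemma map_const: "\<forall>x\<in>set xs. f x = c \<Longrightarrow> map f xs = replicate (length xs) c"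
  by (induct xs) auto

lemma rep_upd_mset: "i < m \<Longrightarrow> mset ((replicate m a)[i:=w]) = mset (w # replicate (m-1) a)"
proof -
  assume i: "i < m"
  have "mset ((replicate m a)[i:=w]) = add_mset w (mset (replicate m a) - {#replicate m a ! i#})"
    by (rule mset_update) (simp add: i)
  also have "replicate m a ! i = a" using i by simp
  also have "mset (replicate m a) = add_mset a (replicate_mset (m-1) a)" using i by (cases m) auto
  finally show ?thesis by simp
qed

lemma ker_clos:
  assumes K: "krasner_hyperring H m n h k z one" and E: "endomorphism H m n h k one \<theta>"
    and xs: "xs \<in> lists_over (Ker H z \<theta>) m"
  shows "h xs \<subseteq> Ker H z \<theta>"
proof
  fix y assume y: "y \<in> h xs"
  have xsH: "xs \<in> lists_over H m" using xs by (auto simp: lists_over_def Ker_def)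
  have m2: "m \<ge> 2" by (rule kr_m2[OF K])
  have "map \<theta> xs = replicate m z" using xs map_const[of xs \<theta> z]
    by (auto simp: lists_over_def Ker_def)
  also have "\<dots> = z # replicate (m-1) z" using rep_split[OF m2, of z] m2
    by (cases m) auto
  finally have "\<theta> ` h xs = {z}" using en_h[OF E xsH] kr_h0[OF K kr_z[OF K]] by simp
  then have "\<theta> y = z" using y by blast
  moreover have "y \<in> H" using kr_hclos[OF K xsH] y by blast
  ultimately show "y \<in> Ker H z \<theta>" by (simp add: Ker_def)
qed

lemma ker_ideal:
  assumes K: "krasner_hyperring H m n h k z one" and E: "endomorphism H m n h k one \<theta>"
    and tz: "\<theta> z = z"
  shows "hyperideal H m n h k (Ker H z \<theta>)"
  unfolding hyperideal_def
proof (intro conjI ballI allI impI)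
  show "Ker H z \<theta> \<noteq> {}" using kr_z[OF K] tz by (auto simp: Ker_def)
  show "Ker H z \<theta> \<subseteq> H" by (auto simp: Ker_def)
  show "h xs \<subseteq> Ker H z \<theta>" if "xs \<in> lists_over (Ker H z \<theta>) m" for xs
    using ker_clos[OF K E that] .
next
  fix xs i assume xs: "xs \<in> lists_over (Ker H z \<theta>) m" and i: "i < m"
  have xsH: "xs \<in> lists_over H m" using xs by (auto simp: lists_over_def Ker_def)
  show "(\<Union>u\<in>Ker H z \<theta>. h (xs[i := u])) = Ker H z \<theta>"
  proof
    show "(\<Union>u\<in>Ker H z \<theta>. h (xs[i := u])) \<subseteq> Ker H z \<theta>"
    proof (rule UN_least)
      fix u assume "u \<in> Ker H z \<theta>"
      then have "xs[i := u] \<in> lists_over (Ker H z \<theta>) m" using xs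
        by (auto simp: lists_over_def dest: subsetD[OF set_update_subset_insert])
      then show "h (xs[i := u]) \<subseteq> Ker H z \<theta>" by (rule ker_clos[OF K E])
    qed
  next
    show "Ker H z \<theta> \<subseteq> (\<Union>u\<in>Ker H z \<theta>. h (xs[i := u]))"
    proof
      fix x assume x: "x \<in> Ker H z \<theta>"
      then have "x \<in> (\<Union>u\<in>H. h (xs[i:=u]))" using kr_hrep[OF K xsH i] by (auto simp: Ker_def)
      then obtain u where u: "u \<in> H" and xu: "x \<in> h (xs[i:=u])" by blast
      have L: "xs[i:=u] \<in> lists_over H m" using xsH u
        by (auto simp: lists_over_def dest: subsetD[OF set_update_subset_insert])
      have mx: "map \<theta> xs = replicate m z" using xs map_const[of xs \<theta> z]
        by (auto simp: lists_over_def Ker_def)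
      have lm: "length xs = m" using xs by (simp add: lists_over_def)
      have tu: "\<theta> u \<in> H" using en_H[OF E u] .
      have L2: "\<theta> u # replicate (m-1) z \<in> lists_over H m"
        using tu kr_z[OF K] kr_m2[OF K] by (auto simp: lists_over_def)
      have "\<theta> x \<in> h (map \<theta> (xs[i:=u]))" using en_h[OF E L] xu by blast
      also have "map \<theta> (xs[i:=u]) = (replicate m z)[i := \<theta> u]" by (simp add: map_update mx)
      also have "h ((replicate m z)[i := \<theta> u]) = h (\<theta> u # replicate (m-1) z)"
        by (rule kr_comm[OF K L2]) (simp add: rep_upd_mset i)
      also have "\<dots> = {\<theta> u}" using kr_h0[OF K tu] .
      finally have "\<theta> u = z" using x by (simp add: Ker_def)
      then have "u \<in> Ker H z \<theta>" using u by (simp add: Ker_def)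
      then show "x \<in> (\<Union>u\<in>Ker H z \<theta>. h (xs[i := u]))" using xu by blast
    qed
  qed
next
  fix as i u assume as: "as \<in> lists_over H (n - 1)" and i: "i < n" and u: "u \<in> Ker H z \<theta>"
  have n2: "n \<ge> 2" by (rule kr_n2[OF K])
  have L: "take i as @ u # drop i as \<in> lists_over H n" using as u n2
    by (auto simp: lists_over_def Ker_def dest: in_set_takeD in_set_dropD)
  have mas: "map \<theta> as \<in> lists_over H (n-1)" using as en_H[OF E] by (auto simp: lists_over_def)
  have "\<theta> (k (take i as @ u # drop i as)) = k (take i (map \<theta> as) @ z # drop i (map \<theta> as))"
    using en_k[OF E L] u by (simp add: Ker_def take_map drop_map)
  also have "\<dots> = z" by (rule kr_k0[OF K mas i])
  finally show "k (take i as @ u # drop i as) \<in> Ker H z \<theta>"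
    using kr_kclos[OF K L] by (simp add: Ker_def)
qed


lemma chain_list:
  assumes "C \<noteq> {}" and ch: "\<forall>X\<in>C. \<forall>Y\<in>C. X \<subseteq> Y \<or> Y \<subseteq> X"
  shows "set xs \<subseteq> \<Union>C \<Longrightarrow> \<exists>I\<in>C. set xs \<subseteq> I"
proof (induct xs)
  case Nil then show ?case using assms(1) by auto
next
  case (Cons x xs)
  then obtain I where I: "I \<in> C" "set xs \<subseteq> I" by auto
  from Cons.prems obtain J where J: "J \<in> C" "x \<in> J" by auto
  from ch I J have "I \<subseteq> J \<or> J \<subseteq> I" by blast
  then show ?case using I J by auto
qed

lemma exists_max:
  assumes K: "krasner_hyperring H m n h k z one" and E: "hyperideal H m n h k E" and EH: "E \<noteq> H"
  shows "\<exists>M\<in>MaxH H m n h k. E \<subseteq> M"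
proof -
  define A where "A = {I. hyperideal H m n h k I \<and> E \<subseteq> I \<and> one \<notin> I}"
  have EA: "E \<in> A" using one_in[OF K E] EH E by (auto simp: A_def)
  have "\<exists>M\<in>A. \<forall>X\<in>A. M \<subseteq> X \<longrightarrow> X = M"
  proof (rule subset_Zorn_nonempty)
    show "A \<noteq> {}" using EA by blast
  next
    fix C assume Cne: "C \<noteq> {}" and chC: "subset.chain A C"
    have CA: "C \<subseteq> A" and ch: "\<forall>X\<in>C. \<forall>Y\<in>C. X \<subseteq> Y \<or> Y \<subseteq> X"
      using chC by (auto simp: subset_chain_def)
    have hC: "\<And>I. I \<in> C \<Longrightarrow> hyperideal H m n h k I" using CA by (auto simp: A_def)
    have L: "\<And>xs. xs \<in> lists_over (\<Union>C) m \<Longrightarrow> \<exists>I\<in>C. xs \<in> lists_over I m"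
      using chain_list[OF Cne ch] by (auto simp: lists_over_def)
    have clos: "\<And>xs. xs \<in> lists_over (\<Union>C) m \<Longrightarrow> h xs \<subseteq> \<Union>C"
    proof -
      fix xs assume "xs \<in> lists_over (\<Union>C) m"
      then obtain I where "I \<in> C" "xs \<in> lists_over I m" using L by blast
      then show "h xs \<subseteq> \<Union>C" using hi_clos[OF hC] by blast
    qed
    have "hyperideal H m n h k (\<Union>C)"
      unfolding hyperideal_def
    proof (intro conjI ballI allI impI)
      show "\<Union>C \<noteq> {}" using Cne hi_ne[OF hC] by blast
      show "\<Union>C \<subseteq> H" using hi_H[OF hC] by blast
      show "h xs \<subseteq> \<Union>C" if "xs \<in> lists_over (\<Union>C) m" for xs using clos[OF that] .
    next
      fix xs i assume xs: "xs \<in> lists_over (\<Union>C) m" and i: "i < m"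
      show "(\<Union>u\<in>\<Union>C. h (xs[i := u])) = \<Union>C"
      proof
        show "(\<Union>u\<in>\<Union>C. h (xs[i := u])) \<subseteq> \<Union>C"
        proof (rule UN_least)
          fix u assume "u \<in> \<Union>C"
          then have "xs[i := u] \<in> lists_over (\<Union>C) m" using xs
            by (auto simp: lists_over_def dest: subsetD[OF set_update_subset_insert])
          then show "h (xs[i := u]) \<subseteq> \<Union>C" by (rule clos)
        qed
      next
        show "\<Union>C \<subseteq> (\<Union>u\<in>\<Union>C. h (xs[i := u]))"
        proof
          fix x assume "x \<in> \<Union>C"
          then have "x # xs \<in> lists_over (\<Union>C) (Suc m)" using xs by (auto simp: lists_over_def)
          then obtain I where I: "I \<in> C" "x # xs \<in> lists_over I (Suc m)"
            using chain_list[OF Cne ch, of "x # xs"] by (auto simp: lists_over_def)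
          then have x: "x \<in> I" and xsI: "xs \<in> lists_over I m" by (auto simp: lists_over_def)
          then have "x \<in> (\<Union>u\<in>I. h (xs[i := u]))" using hi_rep[OF hC[OF I(1)] xsI i] by blast
          then show "x \<in> (\<Union>u\<in>\<Union>C. h (xs[i := u]))" using I(1) by blast
        qed
      qed
    next
      fix as i u assume "as \<in> lists_over H (n - 1)" "i < n" "u \<in> \<Union>C"
      then show "k (take i as @ u # drop i as) \<in> \<Union>C" using hi_abs[OF hC] by blast
    qed
    moreover have "E \<subseteq> \<Union>C" using Cne CA by (auto simp: A_def)
    moreover have "one \<notin> \<Union>C" using CA by (auto simp: A_def)
    ultimately show "\<Union>C \<in> A" by (simp add: A_def)
  qed
  then obtain M where MA: "M \<in> A" and Mmax: "\<forall>X\<in>A. M \<subseteq> X \<longrightarrow> X = M" by blast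
  have hM: "hyperideal H m n h k M" and EM: "E \<subseteq> M" and oM: "one \<notin> M" using MA by (auto simp: A_def)
  have "M \<noteq> H" using oM kr_one[OF K] by blast
  moreover have "\<forall>I. hyperideal H m n h k I \<and> M \<subseteq> I \<longrightarrow> I = M \<or> I = H"
  proof (intro allI impI)
    fix I assume I: "hyperideal H m n h k I \<and> M \<subseteq> I"
    show "I = M \<or> I = H"
    proof (cases "one \<in> I")
      case True then show ?thesis using one_in[OF K] I by blast
    next
      case False then have "I \<in> A" using I EM by (auto simp: A_def)
      then show ?thesis using Mmax I by blast
    qed
  qed
  ultimately have "M \<in> MaxH H m n h k" using hM by (simp add: MaxH_def)
  then show ?thesis using EM by blast
qed

lemma id_endo: "endomorphism H m n h k one id"
  by (simp add: endomorphism_def)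

theorem mainTheorem18:
  assumes "krasner_hyperring H m n h k z one"
    and "endomorphism H m n h k one \<theta>"
  shows "theta_maximal H m n h k \<theta> {z} \<longleftrightarrow> MaxH H m n h k = {Ker H z \<theta>}"
proof
  note K = assms(1) and E = assms(2)
  assume T: "theta_maximal H m n h k \<theta> {z}"
  have hz: "hyperideal H m n h k {z}" and zH: "{z} \<noteq> H"
    and Tm: "\<And>F. hyperideal H m n h k F \<Longrightarrow> {z} \<subseteq> F \<Longrightarrow> \<theta> ` F \<subseteq> {z} \<or> F = H"
    using T unfolding theta_maximal_def by blast+
  have tz: "\<theta> z = z" using Tm[OF hz] zH by blast
  have KI: "hyperideal H m n h k (Ker H z \<theta>)" by (rule ker_ideal[OF K E tz])
  have "one \<notin> Ker H z \<theta>" using one_ne_z[OF K zH] en_one[OF E] by (simp add: Ker_def)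
  then have KH: "Ker H z \<theta> \<noteq> H" using kr_one[OF K] by blast
  have sub: "\<And>F. hyperideal H m n h k F \<Longrightarrow> F \<noteq> H \<Longrightarrow> F \<subseteq> Ker H z \<theta>"
  proof -
    fix F assume F: "hyperideal H m n h k F" "F \<noteq> H"
    have "\<theta> ` F \<subseteq> {z}" using Tm[OF F(1)] zero_in[OF K F(1)] F(2) by blast
    then show "F \<subseteq> Ker H z \<theta>" using hi_H[OF F(1)] by (auto simp: Ker_def)
  qed
  show "MaxH H m n h k = {Ker H z \<theta>}"
  proof (rule set_eqI, rule iffI)
    fix M assume "M \<in> MaxH H m n h k"
    then have M: "hyperideal H m n h k M" "M \<noteq> H"
      "\<forall>I. hyperideal H m n h k I \<and> M \<subseteq> I \<longrightarrow> I = M \<or> I = H" by (auto simp: MaxH_def)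
    then show "M \<in> {Ker H z \<theta>}" using sub[OF M(1) M(2)] KI KH by blast
  next
    fix M assume "M \<in> {Ker H z \<theta>}"
    then have "M = Ker H z \<theta>" by simp
    moreover have "Ker H z \<theta> \<in> MaxH H m n h k"
      using KI KH sub by (auto simp: MaxH_def)
    ultimately show "M \<in> MaxH H m n h k" by simp
  qed
next
  note K = assms(1) and E = assms(2)
  assume MX: "MaxH H m n h k = {Ker H z \<theta>}"
  then have "Ker H z \<theta> \<in> MaxH H m n h k" by simp
  then have KI: "hyperideal H m n h k (Ker H z \<theta>)" and KH: "Ker H z \<theta> \<noteq> H"
    by (auto simp: MaxH_def)
  have zK: "z \<in> Ker H z \<theta>" by (rule zero_in[OF K KI])
  have "Ker H z id = {z}" using kr_z[OF K] by (auto simp: Ker_def)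
  then have hz: "hyperideal H m n h k {z}" using ker_ideal[OF K id_endo] by simp
  have zH: "{z} \<noteq> H" using zK KH by (auto simp: Ker_def)
  show "theta_maximal H m n h k \<theta> {z}"
    unfolding theta_maximal_def
  proof (intro conjI allI impI hz zH)
    fix F assume F: "hyperideal H m n h k F \<and> {z} \<subseteq> F"
    show "\<theta> ` F \<subseteq> {z} \<or> F = H"
    proof (cases "F = H")
      case False
      then obtain M where "M \<in> MaxH H m n h k" "F \<subseteq> M" using exists_max[OF K] F by blast
      then have "F \<subseteq> Ker H z \<theta>" using MX by auto
      then show ?thesis by (auto simp: Ker_def)
    qed simp
  qed
qed

end
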